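(* Let $G$ be a finite group. Then there exist $d\ge1$ and $w\in F_d$ with $w(G)=[G,G]$. Moreover, if $G$ is a finite $p$-group, then there exist $d'\ge1$ and $w'\in F_{d'}$ with $w'(G)=\Phi(G)$.
   Context: $F_d$ is the free group on $d$ letters; for $w\in F_d$, $w(G)$ is the image of the word map $G^d\to G$ given by evaluating $w$. $\Phi(G)$ is the Frattini subgroup. *)

theory Defs
  imports "HOL-Algebra.Algebra"
begin

text \<open>Elements of the free group F_d are represented by words: lists of letters (i, b)
  with i < d, where (i, True) stands for the generator x_i and (i, False) for its inverse.
  Every element of F_d is represented by such a list (e.g. its reduced form), and the word
  map only depends on the element of F_d, so the image of the word map is well defined.\<close>

definition free_word :: "nat \<Rightarrow> (nat \<times> bool) list \<Rightarrow> bool" where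
  "free_word d w \<longleftrightarrow> (\<forall>l \<in> set w. fst l < d)"

definition letter_eval :: "('a, 'b) monoid_scheme \<Rightarrow> (nat \<Rightarrow> 'a) \<Rightarrow> nat \<times> bool \<Rightarrow> 'a" where
  "letter_eval G g l = (if snd l then g (fst l) else inv\<^bsub>G\<^esub> (g (fst l)))"

definition word_eval :: "('a, 'b) monoid_scheme \<Rightarrow> (nat \<Rightarrow> 'a) \<Rightarrow> (nat \<times> bool) list \<Rightarrow> 'a" where
  "word_eval G g w = foldr (\<lambda>l acc. letter_eval G g l \<otimes>\<^bsub>G\<^esub> acc) w \<one>\<^bsub>G\<^esub>"

definition word_image :: "('a, 'b) monoid_scheme \<Rightarrow> nat \<Rightarrow> (nat \<times> bool) list \<Rightarrow> 'a set" where
  "word_image G d w = {word_eval G g w | g. g \<in> {..<d} \<rightarrow> carrier G}"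

definition maximal_subgroup :: "'a set \<Rightarrow> ('a, 'b) monoid_scheme \<Rightarrow> bool" where
  "maximal_subgroup H G \<longleftrightarrow> subgroup H G \<and> H \<noteq> carrier G \<and>
     (\<forall>K. subgroup K G \<and> H \<subseteq> K \<and> K \<noteq> carrier G \<longrightarrow> K = H)"

text \<open>Frattini subgroup: intersection of all maximal subgroups (= G if there are none).\<close>
definition frattini :: "('a, 'b) monoid_scheme \<Rightarrow> 'a set" where
  "frattini G = carrier G \<inter> \<Inter> {H. maximal_subgroup H G}"

definition p_group :: "('a, 'b) monoid_scheme \<Rightarrow> nat \<Rightarrow> bool" where
  "p_group G p \<longleftrightarrow> Factorial_Ring.prime p \<and> finite (carrier G) \<and> (\<exists>n. order G = p ^ n)"

end

theory Submission
  imports Defs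
begin


context group begin

lemma letter_eval_closed: "g (fst l) \<in> carrier G \<Longrightarrow> letter_eval G g l \<in> carrier G"
  by (simp add: letter_eval_def)

lemma word_eval_closed: "\<forall>l\<in>set w. g (fst l) \<in> carrier G \<Longrightarrow> word_eval G g w \<in> carrier G"
  by (induction w) (auto simp: word_eval_def letter_eval_closed)

lemma word_eval_Nil[simp]: "word_eval G g [] = \<one>"
  by (simp add: word_eval_def)

lemma word_eval_Cons: "word_eval G g (l # w) = letter_eval G g l \<otimes> word_eval G g w"
  by (simp add: word_eval_def)

lemma word_eval_append:
  assumes "\<forall>l\<in>set u. g (fst l) \<in> carrier G" "\<forall>l\<in>set w. g (fst l) \<in> carrier G"
  shows "word_eval G g (u @ w) = word_eval G g u \<otimes> word_eval G g w"
  using assms(1)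
proof (induction u)
  case Nil
  then show ?case using word_eval_closed[OF assms(2)] by simp
next
  case (Cons a u)
  then show ?case using word_eval_closed[OF assms(2)] word_eval_closed[of u g]
    by (simp add: word_eval_Cons m_assoc letter_eval_closed)
qed

lemma word_eval_cong:
  "\<forall>l\<in>set w. g (fst l) = h (fst l) \<Longrightarrow> word_eval G g w = word_eval G h w"
  by (induction w) (auto simp: word_eval_Cons letter_eval_def)

lemma word_eval_shift:
  "word_eval G g (map (\<lambda>(i,b). (i + d, b)) w) = word_eval G (\<lambda>i. g (i + d)) w"
  by (induction w) (auto simp: word_eval_Cons letter_eval_def)

lemma word_eval_replicate:
  "g 0 \<in> carrier G \<Longrightarrow> word_eval G g (replicate n (0, True)) = g 0 [^] n"
  apply (induction n) apply (auto simp: word_eval_Cons letter_eval_def nat_pow_Suc2 simp del: nat_pow_Suc)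
  apply (metis nat_pow_Suc nat_pow_Suc2)
  done

end

fun rep :: "(nat \<times> bool) list \<Rightarrow> nat \<Rightarrow> nat \<Rightarrow> (nat \<times> bool) list" where
  "rep v d 0 = []"
| "rep v d (Suc n) = v @ map (\<lambda>(i,b). (i + d, b)) (rep v d n)"

lemma free_word_rep: "free_word d v \<Longrightarrow> free_word (n * d) (rep v d n)"
  by (induction n) (auto simp: free_word_def)

fun prodset :: "('a, 'b) monoid_scheme \<Rightarrow> 'a set \<Rightarrow> nat \<Rightarrow> 'a set" where
  "prodset G S 0 = {\<one>\<^bsub>G\<^esub>}"
| "prodset G S (Suc n) = {s \<otimes>\<^bsub>G\<^esub> t | s t. s \<in> S \<and> t \<in> prodset G S n}"

lemma (in group) word_image_rep:
  assumes "free_word d v"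
  shows "word_image G (n * d) (rep v d n) = prodset G (word_image G d v) n"
proof (induction n)
  case 0
  then show ?case by (auto simp: word_image_def)
next
  case (Suc n)
  have fv: "\<forall>l\<in>set v. fst l < d" using assms by (simp add: free_word_def)
  have fr: "\<forall>l\<in>set (rep v d n). fst l < n * d" using free_word_rep[OF assms, of n] by (simp add: free_word_def)
  show ?case
  proof (rule equalityI; rule subsetI)
    fix x assume "x \<in> word_image G (Suc n * d) (rep v d (Suc n))"
    then obtain g where g: "g \<in> {..<Suc n * d} \<rightarrow> carrier G" and x: "x = word_eval G g (rep v d (Suc n))"
      by (auto simp: word_image_def)
    have c1: "\<forall>l\<in>set v. g (fst l) \<in> carrier G"
    proof
      fix l assume "l \<in> set v" then have "fst l < Suc n * d" using fv by fastforce
      then show "g (fst l) \<in> carrier G" using g by blast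
    qed
    have c2: "\<forall>l\<in>set (map (\<lambda>(i,b). (i + d, b)) (rep v d n)). g (fst l) \<in> carrier G"
    proof
      fix l assume "l \<in> set (map (\<lambda>(i,b). (i + d, b)) (rep v d n))"
      then have "fst l < Suc n * d" using fr by fastforce
      then show "g (fst l) \<in> carrier G" using g by blast
    qed
    have "x = word_eval G g v \<otimes> word_eval G (\<lambda>i. g (i + d)) (rep v d n)"
      using x word_eval_append[OF c1 c2] word_eval_shift by simp
    moreover have "word_eval G g v \<in> word_image G d v"
      unfolding word_image_def using g by (auto intro!: exI[of _ g])
    moreover have "word_eval G (\<lambda>i. g (i + d)) (rep v d n) \<in> word_image G (n * d) (rep v d n)"
      unfolding word_image_def using g by (auto intro!: exI[of _ "\<lambda>i. g (i + d)"])
    ultimately show "x \<in> prodset G (word_image G d v) (Suc n)"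
      using Suc by auto
  next
    fix x assume "x \<in> prodset G (word_image G d v) (Suc n)"
    then obtain s t where x: "x = s \<otimes> t" and s: "s \<in> word_image G d v"
      and t: "t \<in> word_image G (n * d) (rep v d n)" using Suc by auto
    obtain f where f: "f \<in> {..<d} \<rightarrow> carrier G" "s = word_eval G f v"
      using s by (auto simp: word_image_def)
    obtain h where h: "h \<in> {..<n * d} \<rightarrow> carrier G" "t = word_eval G h (rep v d n)"
      using t by (auto simp: word_image_def)
    define g where "g = (\<lambda>i. if i < d then f i else h (i - d))"
    have g: "g \<in> {..<Suc n * d} \<rightarrow> carrier G"
    proof
      fix i assume i: "i \<in> {..<Suc n * d}"
      show "g i \<in> carrier G"
      proof (cases "i < d")
        case True then show ?thesis using f(1) by (simp add: Pi_iff g_def)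
      next
        case False then have "i - d < n * d" using i by auto
        then show ?thesis using h(1) False by (simp add: Pi_iff g_def)
      qed
    qed
    have c1: "\<forall>l\<in>set v. g (fst l) \<in> carrier G"
    proof
      fix l assume "l \<in> set v" then have "fst l < Suc n * d" using fv by fastforce
      then show "g (fst l) \<in> carrier G" using g by blast
    qed
    have c2: "\<forall>l\<in>set (map (\<lambda>(i,b). (i + d, b)) (rep v d n)). g (fst l) \<in> carrier G"
    proof
      fix l assume "l \<in> set (map (\<lambda>(i,b). (i + d, b)) (rep v d n))"
      then have "fst l < Suc n * d" using fr by fastforce
      then show "g (fst l) \<in> carrier G" using g by blast
    qed
    have "word_eval G g (rep v d (Suc n)) = word_eval G g v \<otimes> word_eval G (\<lambda>i. g (i + d)) (rep v d n)"
      using word_eval_append[OF c1 c2] word_eval_shift by simp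
    also have "word_eval G g v = s" using f(2) fv by (auto simp: g_def intro!: word_eval_cong)
    also have "(\<lambda>i. g (i + d)) = h" by (auto simp: g_def)
    finally have "word_eval G g (rep v d (Suc n)) = x" using x h by simp
    then show "x \<in> word_image G (Suc n * d) (rep v d (Suc n))"
      using g unfolding word_image_def by blast
  qed
qed




lemma (in group) finite_closed_subgroup:
  assumes fin: "finite (carrier G)" and S: "S \<subseteq> carrier G" "\<one> \<in> S"
    and cl: "\<And>x y. x \<in> S \<Longrightarrow> y \<in> S \<Longrightarrow> x \<otimes> y \<in> S"
  shows "subgroup S G"
proof (rule subgroupI)
  show "S \<subseteq> carrier G" by fact
  show "S \<noteq> {}" using S by auto
  show "a \<otimes> b \<in> S" if "a \<in> S" "b \<in> S" for a b using cl that by blast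
  fix a assume a: "a \<in> S"
  have ac: "a \<in> carrier G" using a S by auto
  have pw: "a [^] (k::nat) \<in> S" for k
    by (induction k) (auto simp: S(2) cl a)
  have "order G \<ge> 1" using fin ac by (auto simp: order_def Suc_le_eq card_gt_0_iff)
  then have "a [^] (order G - 1) \<otimes> a = a [^] order G"
    by (metis Suc_diff_le diff_Suc_1 ac nat_pow_Suc)
  also have "\<dots> = \<one>" using pow_order_eq_1[OF ac] .
  finally have "inv a = a [^] (order G - 1)"
    using ac by (simp add: inv_equality)
  then show "inv a \<in> S" using pw by simp
qed

context group begin

lemma ps_carrier: "S \<subseteq> carrier G \<Longrightarrow> prodset G S n \<subseteq> carrier G"
  by (induction n) auto

lemma ps_mono: "S \<subseteq> carrier G \<Longrightarrow> \<one> \<in> S \<Longrightarrow> prodset G S n \<subseteq> prodset G S (Suc n)"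
proof (induction n)
  case 0 then show ?case by force
next
  case (Suc n)
  show ?case
  proof
    fix x assume "x \<in> prodset G S (Suc n)"
    then obtain s t where "x = s \<otimes> t" "s \<in> S" "t \<in> prodset G S n" by auto
    then show "x \<in> prodset G S (Suc (Suc n))" using Suc by auto
  qed
qed

lemma ps_mono_add: "S \<subseteq> carrier G \<Longrightarrow> \<one> \<in> S \<Longrightarrow> prodset G S n \<subseteq> prodset G S (n + k)"
  proof (induction k)
    case (Suc k) then show ?case using ps_mono[of S "n + k"] by auto
  qed simp

lemma ps_mult: "S \<subseteq> carrier G \<Longrightarrow> x \<in> prodset G S a \<Longrightarrow> y \<in> prodset G S b
   \<Longrightarrow> x \<otimes> y \<in> prodset G S (a + b)"
proof (induction a arbitrary: x)
  case 0 then show ?case using ps_carrier[of S b] by auto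
next
  case (Suc a)
  then obtain s t where st: "x = s \<otimes> t" "s \<in> S" "t \<in> prodset G S a" by auto
  then have "t \<otimes> y \<in> prodset G S (a + b)" using Suc by auto
  moreover have "x \<otimes> y = s \<otimes> (t \<otimes> y)"
  proof -
    have "s \<in> carrier G" "t \<in> carrier G" "y \<in> carrier G"
      using st(2,3) Suc.prems(1,3) ps_carrier[of S a] ps_carrier[of S b] by auto
    then show ?thesis unfolding st(1) by (simp add: m_assoc)
  qed
  ultimately show ?case using st by auto
qed

lemma ps_gen: "S \<subseteq> carrier G \<Longrightarrow> prodset G S n \<subseteq> generate G S"
  by (induction n) (auto intro: generate.one generate.eng generate.incl)

lemma ps_stable:
  assumes fin: "finite (carrier G)" and S: "S \<subseteq> carrier G" "\<one> \<in> S"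
  shows "\<exists>N. prodset G S (Suc N) = prodset G S N"
proof (rule ccontr)
  assume "\<not> ?thesis"
  then have ne: "prodset G S n \<subset> prodset G S (Suc n)" for n using ps_mono[OF S] by blast
  have "card (prodset G S n) \<ge> n" for n
  proof (induction n)
    case (Suc n)
    have "card (prodset G S n) < card (prodset G S (Suc n))"
      using ne[of n] ps_carrier[OF S(1), of "Suc n"] fin by (meson psubset_card_mono rev_finite_subset)
    then show ?case using Suc by simp
  qed simp
  moreover have "card (prodset G S n) \<le> card (carrier G)" for n
    using ps_carrier[OF S(1)] fin by (simp add: card_mono)
  ultimately have "Suc (card (carrier G)) \<le> card (carrier G)" by (meson le_trans)
  then show False by simp
qed

lemma generate_prodset:
  assumes fin: "finite (carrier G)" and S: "S \<subseteq> carrier G" "\<one> \<in> S"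
  shows "\<exists>n\<ge>1. generate G S = prodset G S n"
proof -
  obtain N where N: "prodset G S (Suc N) = prodset G S N" using ps_stable[OF assms] by blast
  have st: "prodset G S (N + k) = prodset G S N" for k
    by (induction k) (use N in auto)
  define U where "U = prodset G S (Suc N)"
  have U: "U = prodset G S N" using N U_def by simp
  have "subgroup U G"
  proof (rule finite_closed_subgroup[OF fin])
    show "U \<subseteq> carrier G" unfolding U_def by (rule ps_carrier[OF S(1)])
    show "\<one> \<in> U" using ps_mono_add[OF S, of 0 N] U by auto
    fix x y assume "x \<in> U" "y \<in> U"
    then have "x \<otimes> y \<in> prodset G S (N + N)" using ps_mult[OF S(1)] U by auto
    then show "x \<otimes> y \<in> U" using st U by simp
  qed
  moreover have "S \<subseteq> U"
  proof
    fix s assume "s \<in> S"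
    have "s = s \<otimes> \<one>" using \<open>s \<in> S\<close> S(1) by auto
    then have "s \<in> prodset G S (Suc 0)" using \<open>s \<in> S\<close> S(2) by auto
    then have "s \<in> prodset G S (N + Suc 0)" using ps_mono_add[OF S, of "Suc 0" N] by (auto simp: add.commute)
    then show "s \<in> U" using st[of "Suc 0"] U by (simp del: prodset.simps)
  qed
  ultimately have "generate G S \<subseteq> U" by (simp add: generate_subgroup_incl)
  moreover have "U \<subseteq> generate G S" unfolding U_def by (rule ps_gen[OF S(1)])
  ultimately show ?thesis unfolding U_def by (intro exI[of _ "Suc N"]) auto
qed

lemma word_image_carrier: "free_word d v \<Longrightarrow> word_image G d v \<subseteq> carrier G"
  unfolding word_image_def free_word_def
  by (auto intro!: word_eval_closed simp: Pi_iff)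

lemma word_gen:
  assumes fin: "finite (carrier G)" and v: "free_word d v" "d \<ge> 1" and one: "\<one> \<in> word_image G d v"
  shows "\<exists>d'\<ge>1. \<exists>w. free_word d' w \<and> word_image G d' w = generate G (word_image G d v)"
proof -
  obtain n where n: "n \<ge> 1" "generate G (word_image G d v) = prodset G (word_image G d v) n"
    using generate_prodset[OF fin word_image_carrier[OF v(1)] one] by blast
  show ?thesis
    using n v word_image_rep[OF v(1), of n] free_word_rep[OF v(1), of n]
    by (intro exI[of _ "n * d"]) auto
qed

end



lemma (in group_action) fp_dvd:
  assumes p: "Factorial_Ring.prime p" and ord: "order G = p ^ n" and fE: "finite E"
  shows "p dvd card (E - {x\<in>E. \<forall>g\<in>carrier G. \<phi> g x = x})"
proof -
  interpret group G using group_hom group_hom.axioms(1) by auto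
  define F where "F = {x\<in>E. \<forall>g\<in>carrier G. \<phi> g x = x}"
  define f where "f = (\<lambda>x. if x \<in> F then 0 else (1::nat))"
  have "card (E - F) = (\<Sum>x\<in>E. f x)"
    using fE by (simp add: f_def sum.If_cases Diff_eq)
  also have "\<dots> = (\<Sum>orb\<in>orbits G E \<phi>. \<Sum>x\<in>orb. f x)"
    by (rule disjoint_sum[OF fE, symmetric])
  also have "p dvd \<dots>"
  proof (rule dvd_sum)
    fix orb assume "orb \<in> orbits G E \<phi>"
    then obtain y where y: "y \<in> E" and orb: "orb = orbit G \<phi> y" by (auto simp: orbits_def)
    show "p dvd (\<Sum>x\<in>orb. f x)"
    proof (cases "y \<in> F")
      case True
      have "orb = {y}" using True orb by (auto simp: orbit_def F_def) (metis one_closed)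
      then show ?thesis using True by (simp add: f_def)
    next
      case False
      have nf: "x \<notin> F" if xo: "x \<in> orb" for x
      proof
        assume xF: "x \<in> F"
        obtain g where g: "g \<in> carrier G" "\<phi> g y = x" using xo orb by (auto simp: orbit_def)
        have "\<phi> (inv g) x = y" using orbit_sym_aux[OF g(1) y g(2)] .
        moreover have "\<phi> (inv g) x = x" using xF g(1) by (auto simp: F_def)
        ultimately show False using xF False by simp
      qed
      have "(\<Sum>x\<in>orb. f x) = card orb" using nf by (simp add: f_def)
      moreover have "card orb dvd p ^ n"
        using orbit_stabilizer_theorem[OF y] ord orb by (metis dvd_triv_left)
      then obtain i where i: "card orb = p ^ i" using divides_primepow_nat[OF p] by blast
      moreover have "i \<noteq> 0"
      proof
        assume "i = 0"
        then have "card orb = 1" using i by simp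
        moreover have "y \<in> orb" using orbit_refl[OF y] orb by simp
        ultimately have "orb = {y}" by (metis card_1_singletonE singletonD)
        then have "y \<in> F" using y orb by (auto simp: orbit_def F_def)
        then show False using False by simp
      qed
      ultimately show ?thesis by simp
    qed
  qed
  finally show ?thesis unfolding F_def .
qed

lemma (in group) p_group_normalizer:
  assumes p: "Factorial_Ring.prime p" and ord: "order G = p ^ n" and M: "subgroup M G" and Mne: "M \<noteq> carrier G"
  shows "\<exists>x \<in> carrier G - M. \<forall>m\<in>M. x \<otimes> m \<otimes> inv x \<in> M"
proof -
  have fin: "finite (carrier G)"
    using ord p by (metis order_def card.infinite not_prime_0 power_not_zero)
  define H where "H = G\<lparr>carrier := M\<rparr>"
  define E where "E = rcosets M"
  define \<phi> where "\<phi> = (\<lambda>m. \<lambda>C\<in>E. C #> inv m)"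
  have Msub: "M \<subseteq> carrier G" using M subgroup.subset by blast
  have Ecl: "C #> a \<in> E" if CE: "C \<in> E" and ac: "a \<in> carrier G" for C a
  proof -
    have "C \<in> (\<Union>a\<in>carrier G. {M #> a})" using CE by (simp add: E_def RCOSETS_def)
    then obtain x where x: "x \<in> carrier G" "C = M #> x" by blast
    then show ?thesis using ac Msub by (simp add: coset_mult_assoc E_def rcosetsI)
  qed
  have Ecar: "C \<subseteq> carrier G" if "C \<in> E" for C
    using that M by (simp add: E_def subgroup.rcosets_carrier is_group)
  have bij: "\<phi> m \<in> Bij E" if m: "m \<in> M" for m
  proof -
    have mc: "m \<in> carrier G" using m Msub by auto
    have "bij_betw (\<lambda>C. C #> inv m) E E"
    proof (rule bij_betw_byWitness[where f'="\<lambda>C. C #> m"])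
      show "\<forall>a\<in>E. a #> inv m #> m = a" using mc Ecar by (simp add: coset_mult_assoc)
      show "\<forall>a\<in>E. a #> m #> inv m = a" using mc Ecar by (simp add: coset_mult_assoc)
      show "(\<lambda>C. C #> inv m) ` E \<subseteq> E" using Ecl mc by auto
      show "(\<lambda>C. C #> m) ` E \<subseteq> E" using Ecl mc by auto
    qed
    then have "bij_betw (\<phi> m) E E" unfolding \<phi>_def by (simp only: bij_betw_restrict_eq)
    then show ?thesis unfolding Bij_def \<phi>_def by simp
  qed
  have act: "group_action H E \<phi>"
    unfolding group_action_def
  proof (rule group_hom.intro)
    show "group H" unfolding H_def using M by (simp add: subgroup.subgroup_is_group is_group)
    show "group (BijGroup E)" by (rule group_BijGroup)
    show "group_hom_axioms H (BijGroup E) \<phi>"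
    proof (rule group_hom_axioms.intro, rule homI)
      fix m assume "m \<in> carrier H" then show "\<phi> m \<in> carrier (BijGroup E)"
        using bij by (simp add: H_def BijGroup_def)
    next
      fix a b assume ab: "a \<in> carrier H" "b \<in> carrier H"
      then have a: "a \<in> M" and b: "b \<in> M" by (auto simp: H_def)
      have ac: "a \<in> carrier G" and bc: "b \<in> carrier G" using a b Msub by auto
      have "\<phi> (a \<otimes> b) = compose E (\<phi> a) (\<phi> b)"
      proof (rule ext)
        fix C show "\<phi> (a \<otimes> b) C = compose E (\<phi> a) (\<phi> b) C"
          using Ecl Ecar ac bc by (auto simp: \<phi>_def compose_def coset_mult_assoc inv_mult_group)
      qed
      then show "\<phi> (a \<otimes>\<^bsub>H\<^esub> b) = \<phi> a \<otimes>\<^bsub>BijGroup E\<^esub> \<phi> b"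
        using bij[OF a] bij[OF b] by (simp add: H_def BijGroup_def)
    qed
  qed
  have lag: "card E * card M = p ^ n" using lagrange[OF M] ord by (simp add: E_def)
  then obtain j where j: "card M = p ^ j" using divides_primepow_nat[OF p] by (metis dvd_triv_right)
  have ordH: "order H = p ^ j" using j by (simp add: H_def order_def)
  have "E \<subseteq> Pow (carrier G)" using Ecar by blast
  then have fE: "finite E" using fin by (meson finite_Pow_iff finite_subset)
  define F where "F = {x\<in>E. \<forall>g\<in>carrier H. \<phi> g x = x}"
  have dF: "p dvd card (E - F)" using group_action.fp_dvd[OF act p ordH fE] by (simp add: F_def)
  obtain i where i: "card E = p ^ i" using lag divides_primepow_nat[OF p] by (metis dvd_triv_left)
  have "i \<noteq> 0"
  proof
    assume "i = 0"
    then have "card M = order G" using lag i ord by simp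
    then have "M = carrier G" using Msub fin by (simp add: order_def card_subset_eq)
    then show False using Mne by simp
  qed
  then have dE: "p dvd card E" using i by simp
  have FE: "F \<subseteq> E" by (auto simp: F_def)
  have "card E = card F + card (E - F)" using FE fE by (metis card_Diff_subset finite_subset le_add_diff_inverse card_mono)
  then have dFF: "p dvd card F" using dE dF by (metis dvd_add_right_iff add.commute)
  have MinE: "M \<in> E" using rcosetsI[OF Msub one_closed] Msub by (simp add: E_def)
  have MF: "M \<in> F"
    using MinE M by (auto simp: F_def H_def \<phi>_def coset_join2 subgroup.m_inv_closed subgroup.mem_carrier)
  have "card F \<noteq> 0" using MF fE FE by (metis card_0_eq empty_iff finite_subset)
  then have "card F \<ge> p" using dFF by (simp add: dvd_imp_le)
  then have "card F \<ge> 2" using p prime_ge_2_nat by (metis le_trans)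
  moreover have "card F \<le> 1" if "F \<subseteq> {M}"
    using card_mono[OF _ that] by simp
  ultimately have "\<not> F \<subseteq> {M}" by linarith
  then obtain C where C: "C \<in> F" "C \<noteq> M" by blast
  then obtain x where x: "x \<in> carrier G" "C = M #> x" unfolding F_def E_def RCOSETS_def by blast
  have xM: "x \<notin> M" using x C M coset_join2 by blast
  have "x \<otimes> m \<otimes> inv x \<in> M" if m: "m \<in> M" for m
  proof -
    have im: "inv m \<in> M" using m M by (simp add: subgroup.m_inv_closed)
    have mc: "m \<in> carrier G" using m Msub by auto
    have "\<phi> (inv m) C = C" using C(1) im by (auto simp: F_def H_def)
    then have "M #> x #> m = M #> x" using C(1) x by (simp add: \<phi>_def F_def mc)
    then have "M #> (x \<otimes> m) = M #> x" using Msub x mc by (simp add: coset_mult_assoc)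
    then have "x \<otimes> m \<in> M #> x" using rcos_self[OF _ M, of "x \<otimes> m"] x mc by simp
    then show ?thesis using subgroup.rcos_module_imp[OF M is_group x(1)] by simp
  qed
  then show ?thesis using x xM by blast
qed




context group begin

lemma inv_cancel_assoc1 [simp]: "x \<in> carrier G \<Longrightarrow> y \<in> carrier G \<Longrightarrow> inv x \<otimes> (x \<otimes> y) = y"
  by (simp add: m_assoc[symmetric])

lemma inv_cancel_assoc2 [simp]: "x \<in> carrier G \<Longrightarrow> y \<in> carrier G \<Longrightarrow> x \<otimes> (inv x \<otimes> y) = y"
  by (simp add: m_assoc[symmetric])

lemma cg_mult:
  assumes K: "subgroup K G" and nK: "\<And>y k. y \<in> carrier G \<Longrightarrow> k \<in> K \<Longrightarrow> y \<otimes> k \<otimes> inv y \<in> K"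
    and c: "x \<in> carrier G" "y \<in> carrier G" "a \<in> carrier G" "b \<in> carrier G"
    and h: "x \<otimes> inv a \<in> K" "y \<otimes> inv b \<in> K"
  shows "(x \<otimes> y) \<otimes> inv (a \<otimes> b) \<in> K"
proof -
  have "(x \<otimes> y) \<otimes> inv (a \<otimes> b) = (x \<otimes> inv a) \<otimes> (a \<otimes> (y \<otimes> inv b) \<otimes> inv a)"
    using c by (simp add: m_assoc inv_mult_group)
  moreover have "a \<otimes> (y \<otimes> inv b) \<otimes> inv a \<in> K" using nK c h by blast
  ultimately show ?thesis using h K by (simp add: subgroup.m_closed)
qed

lemma cg_inv:
  assumes K: "subgroup K G" and nK: "\<And>y k. y \<in> carrier G \<Longrightarrow> k \<in> K \<Longrightarrow> y \<otimes> k \<otimes> inv y \<in> K"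
    and c: "x \<in> carrier G" "a \<in> carrier G"
    and h: "x \<otimes> inv a \<in> K"
  shows "inv x \<otimes> inv (inv a) \<in> K"
proof -
  have "a \<otimes> inv x \<in> K" using subgroup.m_inv_closed[OF K h] c by (simp add: inv_mult_group)
  then have "inv x \<otimes> (a \<otimes> inv x) \<otimes> inv (inv x) \<in> K" using nK c by blast
  moreover have "inv x \<otimes> (a \<otimes> inv x) \<otimes> inv (inv x) = inv x \<otimes> inv (inv a)"
    using c by (simp add: m_assoc)
  ultimately show ?thesis by simp
qed

lemma cg_pow:
  assumes K: "subgroup K G" and nK: "\<And>y k. y \<in> carrier G \<Longrightarrow> k \<in> K \<Longrightarrow> y \<otimes> k \<otimes> inv y \<in> K"
    and c: "x \<in> carrier G" "a \<in> carrier G"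
    and h: "x \<otimes> inv a \<in> K"
  shows "x [^] (n::nat) \<otimes> inv (a [^] n) \<in> K"
proof (induction n)
  case 0 then show ?case using K by (simp add: subgroup.one_closed)
next
  case (Suc n)
  then show ?case using cg_mult[OF K nK _ _ _ _ Suc h] c by simp
qed

lemma cg_ipow:
  assumes K: "subgroup K G" and nK: "\<And>y k. y \<in> carrier G \<Longrightarrow> k \<in> K \<Longrightarrow> y \<otimes> k \<otimes> inv y \<in> K"
    and c: "x \<in> carrier G" "a \<in> carrier G"
    and h: "x \<otimes> inv a \<in> K"
  shows "x [^] (k::int) \<otimes> inv (a [^] k) \<in> K"
proof -
  obtain n where "k = int n \<or> k = - int n" by (metis int_cases2)
  then show ?thesis
  proof
  assume "k = int n"
  then show ?thesis using cg_pow[OF K nK c h, of n] by (simp add: int_pow_int)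
next
  assume "k = - int n"
  then show ?thesis using cg_inv[OF K nK _ _ cg_pow[OF K nK c h, of n]] c
    by (simp add: int_pow_neg_int)
qed
qed

lemma cg_mem:
  assumes K: "subgroup K G" and c: "x \<in> carrier G" "a \<in> carrier G"
    and h: "x \<otimes> inv a \<in> K" and a: "a \<in> K"
  shows "x \<in> K"
proof -
  have "x = (x \<otimes> inv a) \<otimes> a" using c by (simp add: m_assoc)
  then show ?thesis using h a K by (metis subgroup.m_closed)
qed

definition Qs :: "'a set \<Rightarrow> 'a \<Rightarrow> 'a set" where
  "Qs K h = {y \<in> carrier G. \<exists>k::int. y \<otimes> inv (h [^] k) \<in> K}"

lemma Qs_subgroup:
  assumes K: "subgroup K G" and nK: "\<And>y k. y \<in> carrier G \<Longrightarrow> k \<in> K \<Longrightarrow> y \<otimes> k \<otimes> inv y \<in> K"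
    and hc: "h \<in> carrier G"
  shows "subgroup (Qs K h) G" "K \<subseteq> Qs K h" "h \<in> Qs K h"
proof -
  show "K \<subseteq> Qs K h"
  proof
    fix y assume "y \<in> K"
    moreover have yc: "y \<in> carrier G" by (rule subgroup.mem_carrier[OF K \<open>y \<in> K\<close>])
    ultimately have "y \<in> carrier G" "y \<otimes> inv (h [^] (0::int)) \<in> K" by auto
    then show "y \<in> Qs K h" unfolding Qs_def by blast
  qed
  have "h \<otimes> inv (h [^] (1::int)) \<in> K" using hc K by (simp add: subgroup.one_closed)
  then show "h \<in> Qs K h" using hc unfolding Qs_def by blast
  show "subgroup (Qs K h) G"
  proof (rule subgroupI)
    show "Qs K h \<subseteq> carrier G" by (auto simp: Qs_def)
    show "Qs K h \<noteq> {}" using \<open>h \<in> Qs K h\<close> by blast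
  next
    fix y assume "y \<in> Qs K h"
    then obtain k :: int where y: "y \<in> carrier G" "y \<otimes> inv (h [^] k) \<in> K" by (auto simp: Qs_def)
    have "inv y \<otimes> inv (inv (h [^] k)) \<in> K" using cg_inv[OF K nK y(1) _ y(2)] hc by simp
    moreover have "inv (h [^] k) = h [^] (- k)" using hc by (simp add: int_pow_neg)
    ultimately have "inv y \<otimes> inv (h [^] (-k)) \<in> K" by simp
    then show "inv y \<in> Qs K h" using y by (auto simp: Qs_def)
  next
    fix y z assume "y \<in> Qs K h" "z \<in> Qs K h"
    then obtain a b :: int where y: "y \<in> carrier G" "y \<otimes> inv (h [^] a) \<in> K"
      and z: "z \<in> carrier G" "z \<otimes> inv (h [^] b) \<in> K" by (auto simp: Qs_def)
    have "(y \<otimes> z) \<otimes> inv (h [^] a \<otimes> h [^] b) \<in> K"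
      using cg_mult[OF K nK y(1) z(1) _ _ y(2) z(2)] hc by simp
    then have "(y \<otimes> z) \<otimes> inv (h [^] (a + b)) \<in> K" using hc by (simp add: int_pow_mult)
    then show "y \<otimes> z \<in> Qs K h" using y z by (auto simp: Qs_def)
  qed
qed

end



lemma cop1: "Factorial_Ring.prime (p::nat) \<Longrightarrow> coprime (1 - int p * k) (int p ^ n)"
  by (metis dvd_triv_left is_unit_power_iff is_unit_right_imp_coprime
    prime_imp_power_coprime prime_nat_int_transfer zdvd_zdiffD)

lemma cop2: "Factorial_Ring.prime (p::nat) \<Longrightarrow> \<not> int p dvd a \<Longrightarrow> coprime a (int p)"
  by (metis prime_imp_coprime prime_nat_int_transfer coprime_commute)

context group begin

lemma cg_mem2:
  assumes K: "subgroup K G" and c: "x \<in> carrier G" "a \<in> carrier G"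
    and h: "x \<otimes> inv a \<in> K" and a: "x \<in> K"
  shows "a \<in> K"
proof -
  have "a = inv (x \<otimes> inv a) \<otimes> x" using c by (simp add: inv_mult_group m_assoc)
  then show ?thesis using h a K by (metis subgroup.m_closed subgroup.m_inv_closed)
qed

lemma comm_one:
  assumes g: "g \<in> carrier G"
  shows "g [^] (a::int) \<otimes> g [^] (b::int) \<otimes> inv (g [^] a) \<otimes> inv (g [^] b) = \<one>"
proof -
  have "g [^] (a::int) \<otimes> g [^] (b::int) \<otimes> inv (g [^] a) \<otimes> inv (g [^] b)
      = g [^] a \<otimes> g [^] b \<otimes> g [^] (-a) \<otimes> g [^] (-b)" using g by (simp add: int_pow_neg)
  also have "\<dots> = g [^] (a + b + (-a) + (-b))" using g by (simp only: int_pow_mult)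
  also have "\<dots> = \<one>" by simp
  finally show ?thesis .
qed

lemma max_subgroup_contains:
  assumes p: "Factorial_Ring.prime p" and ord: "order G = p ^ n" and Mm: "maximal_subgroup M G"
  shows "\<forall>x\<in>carrier G. x [^] p \<in> M" "\<forall>x\<in>carrier G. \<forall>y\<in>carrier G. x \<otimes> y \<otimes> inv x \<otimes> inv y \<in> M"
proof -
  have M: "subgroup M G" and Mne: "M \<noteq> carrier G"
    and maxl: "\<And>K. subgroup K G \<Longrightarrow> M \<subseteq> K \<Longrightarrow> K \<noteq> carrier G \<Longrightarrow> K = M"
    using Mm by (auto simp: maximal_subgroup_def)
  have fin: "finite (carrier G)"
    using ord p by (metis order_def card.infinite not_prime_0 power_not_zero)
  have Msub: "M \<subseteq> carrier G" using M subgroup.subset by blast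
  obtain x0 where x0: "x0 \<in> carrier G" "x0 \<notin> M" "\<forall>m\<in>M. x0 \<otimes> m \<otimes> inv x0 \<in> M"
    using p_group_normalizer[OF p ord M Mne] by blast
  define Nz where "Nz = {y \<in> carrier G. \<forall>m\<in>M. y \<otimes> m \<otimes> inv y \<in> M}"
  have "subgroup Nz G"
  proof (rule finite_closed_subgroup[OF fin])
    show "Nz \<subseteq> carrier G" by (auto simp: Nz_def)
    show "\<one> \<in> Nz" using Msub by (auto simp: Nz_def)
    fix y1 y2 assume y: "y1 \<in> Nz" "y2 \<in> Nz"
    then have yc: "y1 \<in> carrier G" "y2 \<in> carrier G" by (auto simp: Nz_def)
    have "y1 \<otimes> y2 \<otimes> m \<otimes> inv (y1 \<otimes> y2) \<in> M" if m: "m \<in> M" for m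
    proof -
      have mc: "m \<in> carrier G" using m Msub by auto
      have "y1 \<otimes> y2 \<otimes> m \<otimes> inv (y1 \<otimes> y2) = y1 \<otimes> (y2 \<otimes> m \<otimes> inv y2) \<otimes> inv y1"
        using yc mc by (simp add: m_assoc inv_mult_group)
      moreover have "y2 \<otimes> m \<otimes> inv y2 \<in> M" using y m by (auto simp: Nz_def)
      ultimately show ?thesis using y by (auto simp: Nz_def)
    qed
    then show "y1 \<otimes> y2 \<in> Nz" using yc by (auto simp: Nz_def)
  qed
  moreover have "M \<subseteq> Nz"
    using M Msub by (auto simp: Nz_def subgroup.m_closed subgroup.m_inv_closed)
  moreover have "Nz \<noteq> M" using x0 by (auto simp: Nz_def)
  ultimately have "Nz = carrier G" using maxl by blast
  then have nK: "\<And>y k. y \<in> carrier G \<Longrightarrow> k \<in> M \<Longrightarrow> y \<otimes> k \<otimes> inv y \<in> M"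
    by (auto simp: Nz_def)
  obtain g where g: "g \<in> carrier G" "g \<notin> M" using Mne Msub by blast
  have "Qs M g = carrier G"
    using Qs_subgroup[OF M nK g(1)] maxl g by blast
  then have rep: "\<exists>a::int. x \<otimes> inv (g [^] a) \<in> M" if "x \<in> carrier G" for x
    using that by (auto simp: Qs_def)
  show "\<forall>x\<in>carrier G. \<forall>y\<in>carrier G. x \<otimes> y \<otimes> inv x \<otimes> inv y \<in> M"
  proof (intro ballI)
    fix x y assume xy: "x \<in> carrier G" "y \<in> carrier G"
    obtain a :: int where a: "x \<otimes> inv (g [^] a) \<in> M" using rep[OF xy(1)] by blast
    obtain b :: int where b: "y \<otimes> inv (g [^] b) \<in> M" using rep[OF xy(2)] by blast
    have gc: "g [^] a \<in> carrier G" "g [^] b \<in> carrier G" using g by auto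
    have c1: "(x \<otimes> y) \<otimes> inv (g [^] a \<otimes> g [^] b) \<in> M"
      using cg_mult[OF M nK xy gc a b] .
    have ix: "inv x \<otimes> inv (inv (g [^] a)) \<in> M" using cg_inv[OF M nK xy(1) gc(1) a] .
    have iy: "inv y \<otimes> inv (inv (g [^] b)) \<in> M" using cg_inv[OF M nK xy(2) gc(2) b] .
    have c2: "(x \<otimes> y \<otimes> inv x) \<otimes> inv (g [^] a \<otimes> g [^] b \<otimes> inv (g [^] a)) \<in> M"
      using cg_mult[OF M nK _ _ _ _ c1 ix] xy gc by simp
    have c3: "(x \<otimes> y \<otimes> inv x \<otimes> inv y) \<otimes> inv (g [^] a \<otimes> g [^] b \<otimes> inv (g [^] a) \<otimes> inv (g [^] b)) \<in> M"
      using cg_mult[OF M nK _ _ _ _ c2 iy] xy gc by simp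
    then show "x \<otimes> y \<otimes> inv x \<otimes> inv y \<in> M"
      using comm_one[OF g(1), of a b] cg_mem[OF M _ _ _ subgroup.one_closed[OF M]] xy by simp
  qed
  define h where "h = g [^] p"
  have hc: "h \<in> carrier G" using g by (simp add: h_def)
  have hM: "h \<in> M"
  proof (rule ccontr)
    assume hM: "h \<notin> M"
    have "Qs M h = carrier G"
    proof (rule ccontr)
      assume "Qs M h \<noteq> carrier G"
      then have "Qs M h = M" using Qs_subgroup[OF M nK hc] maxl by blast
      then show False using Qs_subgroup(3)[OF M nK hc] hM by simp
    qed
    then obtain k :: int where k: "g \<otimes> inv (h [^] k) \<in> M" using g by (auto simp: Qs_def)
    have "h [^] k = g [^] (int p * k)" using g by (simp add: h_def int_pow_int[symmetric] int_pow_pow)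
    then have "g \<otimes> inv (h [^] k) = g [^] (1 - int p * k)"
      using g by (simp add: int_pow_diff)
    then have z1: "g [^] (1 - int p * k) \<in> M" using k by simp
    have z2: "g [^] (int p ^ n) \<in> M"
      using pow_order_eq_1[OF g(1)] ord M by (metis int_pow_int of_nat_power subgroup.one_closed)
    obtain u v where uv: "u * (1 - int p * k) + v * (int p ^ n) = 1"
      using bezout_int[of "1 - int p * k" "int p ^ n"] cop1[OF p, of k n]
      by (metis coprime_iff_gcd_eq_1)
    have "g = g [^] (u * (1 - int p * k) + v * (int p ^ n))" using uv g by simp
    also have "\<dots> = (g [^] (1 - int p * k)) [^] u \<otimes> (g [^] (int p ^ n)) [^] v"
      using g by (simp add: int_pow_mult int_pow_pow mult.commute)
    also have "\<dots> \<in> M" using z1 z2 M by (simp add: subgroup_int_pow_closed subgroup.m_closed)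
    finally show False using g by simp
  qed
  show "\<forall>x\<in>carrier G. x [^] p \<in> M"
  proof
    fix x assume x: "x \<in> carrier G"
    obtain a :: int where a: "x \<otimes> inv (g [^] a) \<in> M" using rep[OF x] by blast
    have e0: "x [^] p \<otimes> inv ((g [^] a) [^] p) \<in> M" using cg_pow[OF M nK x _ a] g by simp
    have "(g [^] a) [^] p = h [^] a"
      using g by (simp add: h_def int_pow_int[symmetric] int_pow_pow mult.commute)
    then have e1: "x [^] p \<otimes> inv (h [^] a) \<in> M" using e0 by simp
    have e2: "h [^] a \<in> M" using hM M by (simp add: subgroup_int_pow_closed)
    show "x [^] p \<in> M"
      by (rule cg_mem[OF M nat_pow_closed[OF x] int_pow_closed[OF hc] e1 e2])
  qed
qed

end



context group begin

lemma exists_max_avoiding: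
  assumes fin: "finite (carrier G)" and p: "Factorial_Ring.prime (p::nat)" and N: "subgroup N G"
    and pw: "\<forall>h\<in>carrier G. h [^] p \<in> N"
    and cm: "\<forall>x\<in>carrier G. \<forall>y\<in>carrier G. x \<otimes> y \<otimes> inv x \<otimes> inv y \<in> N"
    and g: "g \<in> carrier G" "g \<notin> N"
  shows "\<exists>M. maximal_subgroup M G \<and> g \<notin> M"
proof -
  define \<K> where "\<K> = {K. subgroup K G \<and> N \<subseteq> K \<and> g \<notin> K}"
  have fK: "finite \<K>"
  proof (rule finite_subset[of _ "Pow (carrier G)"])
    show "\<K> \<subseteq> Pow (carrier G)" by (auto simp: \<K>_def dest: subgroup.mem_carrier)
  qed (use fin in simp)
  have NK: "N \<in> \<K>" using N g by (simp add: \<K>_def)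
  obtain K where K\<K>: "K \<in> \<K>" and Kmax: "\<And>K'. K' \<in> \<K> \<Longrightarrow> card K' \<le> card K"
  proof -
    have "Max (card ` \<K>) \<in> card ` \<K>" using fK NK by (intro Max_in) auto
    then obtain K where "K \<in> \<K>" "card K = Max (card ` \<K>)" by auto
    then show ?thesis using that fK by (metis Max_ge finite_imageI image_eqI)
  qed
  have K: "subgroup K G" and NsK: "N \<subseteq> K" and gK: "g \<notin> K" using K\<K> by (auto simp: \<K>_def)
  have Ksub: "K \<subseteq> carrier G" using K subgroup.subset by blast
  have nK: "y \<otimes> k \<otimes> inv y \<in> K" if y: "y \<in> carrier G" and k: "k \<in> K" for y k
  proof -
    have kc: "k \<in> carrier G" using k Ksub by auto
    have "y \<otimes> k \<otimes> inv y \<otimes> inv k \<in> K" using cm y kc NsK by blast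
    moreover have "y \<otimes> k \<otimes> inv y = (y \<otimes> k \<otimes> inv y \<otimes> inv k) \<otimes> k"
      using y kc by (simp add: m_assoc)
    ultimately show ?thesis using k K by (metis subgroup.m_closed)
  qed
  have bigger: "g \<in> L" if L: "subgroup L G" "K \<subset> L" for L
  proof (rule ccontr)
    assume "g \<notin> L"
    then have "L \<in> \<K>" using L NsK by (auto simp: \<K>_def)
    moreover have "card K < card L"
      using L fin by (meson psubset_card_mono rev_finite_subset subgroup.subset)
    ultimately show False using Kmax by fastforce
  qed
  have "maximal_subgroup K G"
    unfolding maximal_subgroup_def
  proof (intro conjI allI impI)
    show "subgroup K G" by fact
    show "K \<noteq> carrier G" using g gK by blast
    fix L assume L: "subgroup L G \<and> K \<subseteq> L \<and> L \<noteq> carrier G"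
    show "L = K"
    proof (rule ccontr)
      assume "L \<noteq> K"
      then have KL: "K \<subset> L" using L by blast
      have gL: "g \<in> L" using bigger L KL by blast
      obtain h where h: "h \<in> carrier G" "h \<notin> L" using L subgroup.subset by blast
      have hK: "h \<notin> K" using h KL by blast
      note Q = Qs_subgroup[OF K nK h(1)]
      have "K \<subset> Qs K h" using Q(2,3) hK by blast
      then have "g \<in> Qs K h" using bigger Q(1) by blast
      then obtain a :: int where a: "g \<otimes> inv (h [^] a) \<in> K" by (auto simp: Qs_def)
      have hp: "h [^] (int p) \<in> K" using pw h NsK by (auto simp: int_pow_int)
      show False
      proof (cases "int p dvd a")
        case True
        then obtain t where "a = int p * t" by (auto elim: dvdE)
        then have "h [^] a = (h [^] (int p)) [^] t" using h by (simp add: int_pow_pow)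
        then have "h [^] a \<in> K" using hp K by (simp add: subgroup_int_pow_closed)
        then have "g \<in> K" using cg_mem[OF K g(1) _ a] h by simp
        then show False using gK by simp
      next
        case False
        obtain b s where bs: "b * a + s * int p = 1"
          using bezout_int[of a "int p"] cop2[OF p False] by (metis coprime_iff_gcd_eq_1)
        have "g [^] b \<otimes> inv ((h [^] a) [^] b) \<in> K" using cg_ipow[OF K nK g(1) _ a] h by simp
        moreover have "(h [^] a) [^] b = h [^] (b * a)" using h by (simp add: int_pow_pow mult.commute)
        ultimately have e1: "g [^] b \<otimes> inv (h [^] (b * a)) \<in> L" using KL by auto
        have Ls: "subgroup L G" using L by blast
        have e2: "g [^] b \<in> L" using gL Ls by (simp add: subgroup_int_pow_closed)
        have h1: "h [^] (b * a) \<in> L"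
          by (rule cg_mem2[OF Ls int_pow_closed[OF g(1)] int_pow_closed[OF h(1)] e1 e2])
        have "h [^] (s * int p) = (h [^] (int p)) [^] s" using h by (simp add: int_pow_pow mult.commute)
        then have h2: "h [^] (s * int p) \<in> L" using hp K KL by (metis psubsetD subgroup_int_pow_closed)
        have "h = h [^] (b * a + s * int p)" using bs h by simp
        also have "\<dots> = h [^] (b * a) \<otimes> h [^] (s * int p)" using h by (simp add: int_pow_mult)
        also have "\<dots> \<in> L" using h1 h2 L by (simp add: subgroup.m_closed)
        finally show False using h by simp
      qed
    qed
  qed
  then show ?thesis using gK by blast
qed

end



context group begin

definition cw :: "(nat \<times> bool) list" where
  "cw = [(1,True),(2,True),(1,False),(2,False)]"

lemma eval_cw: "g 1 \<in> carrier G \<Longrightarrow> g 2 \<in> carrier G \<Longrightarrow>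
   word_eval G g cw = g 1 \<otimes> g 2 \<otimes> inv (g 1) \<otimes> inv (g 2)"
  by (simp add: cw_def word_eval_Cons letter_eval_def m_assoc)

lemma part1:
  assumes fin: "finite (carrier G)"
  shows "\<exists>d \<ge> 1. \<exists>w. free_word d w \<and> word_image G d w = derived G (carrier G)"
proof -
  define v where "v = [(0::nat,True),(1,True),(0,False),(1,False)]"
  have fv: "free_word 2 v" by (simp add: v_def free_word_def)
  have ev: "word_eval G g v = g 0 \<otimes> g 1 \<otimes> inv (g 0) \<otimes> inv (g 1)"
    if "g 0 \<in> carrier G" "g 1 \<in> carrier G" for g
    using that by (simp add: v_def word_eval_Cons letter_eval_def m_assoc)
  have img: "word_image G 2 v = derived_set G (carrier G)"
  proof (rule equalityI; rule subsetI)
    fix x assume "x \<in> word_image G 2 v"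
    then obtain g where g: "g \<in> {..<2} \<rightarrow> carrier G" "x = word_eval G g v"
      by (auto simp: word_image_def)
    have "g 0 \<in> carrier G" "g 1 \<in> carrier G" using g(1) by auto
    then show "x \<in> derived_set G (carrier G)" using g(2) ev by blast
  next
    fix x assume "x \<in> derived_set G (carrier G)"
    then obtain h1 h2 where h: "h1 \<in> carrier G" "h2 \<in> carrier G"
      "x = h1 \<otimes> h2 \<otimes> inv h1 \<otimes> inv h2" by blast
    define g where "g = (\<lambda>i::nat. if i = 0 then h1 else h2)"
    have "g \<in> {..<2} \<rightarrow> carrier G" using h by (auto simp: g_def)
    moreover have "word_eval G g v = x" using ev[of g] h by (simp add: g_def)
    ultimately show "x \<in> word_image G 2 v" unfolding word_image_def by blast
  qed
  have "\<one> \<in> derived_set G (carrier G)"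
  proof -
    have "\<one> = \<one> \<otimes> \<one> \<otimes> inv \<one> \<otimes> inv \<one>" by simp
    then show ?thesis by blast
  qed
  then obtain d w where "d \<ge> 1" "free_word d w" "word_image G d w = generate G (word_image G 2 v)"
    using word_gen[OF fin fv _] img by auto
  then show ?thesis using img by (auto simp: derived_def)
qed

lemma part2:
  assumes pg: "p_group G p"
  shows "\<exists>d' \<ge> 1. \<exists>w'. free_word d' w' \<and> word_image G d' w' = frattini G"
proof -
  obtain n where p: "Factorial_Ring.prime p" and fin: "finite (carrier G)" and ord: "order G = p ^ n"
    using pg by (auto simp: p_group_def)
  define v where "v = replicate p (0::nat, True) @ cw"
  have fv: "free_word 3 v" by (simp add: v_def cw_def free_word_def)
  have ev: "word_eval G g v = g 0 [^] p \<otimes> (g 1 \<otimes> g 2 \<otimes> inv (g 1) \<otimes> inv (g 2))"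
    if "g 0 \<in> carrier G" "g 1 \<in> carrier G" "g 2 \<in> carrier G" for g
  proof -
    have "word_eval G g v = word_eval G g (replicate p (0, True)) \<otimes> word_eval G g cw"
      unfolding v_def using that by (intro word_eval_append) (auto simp: cw_def)
    then show ?thesis using that by (simp add: word_eval_replicate eval_cw)
  qed
  define T where "T = word_image G 3 v"
  have Tchar: "t \<in> T \<longleftrightarrow> (\<exists>x\<in>carrier G. \<exists>y\<in>carrier G. \<exists>z\<in>carrier G.
      t = x [^] p \<otimes> (y \<otimes> z \<otimes> inv y \<otimes> inv z))" for t
  proof
    assume "t \<in> T"
    then obtain g where g: "g \<in> {..<3} \<rightarrow> carrier G" "t = word_eval G g v"
      by (auto simp: T_def word_image_def)
    have "g 0 \<in> carrier G" "g 1 \<in> carrier G" "g 2 \<in> carrier G" using g(1) by auto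
    then show "\<exists>x\<in>carrier G. \<exists>y\<in>carrier G. \<exists>z\<in>carrier G.
      t = x [^] p \<otimes> (y \<otimes> z \<otimes> inv y \<otimes> inv z)" using g(2) ev by blast
  next
    assume "\<exists>x\<in>carrier G. \<exists>y\<in>carrier G. \<exists>z\<in>carrier G.
      t = x [^] p \<otimes> (y \<otimes> z \<otimes> inv y \<otimes> inv z)"
    then obtain x y z where h: "x \<in> carrier G" "y \<in> carrier G" "z \<in> carrier G"
      "t = x [^] p \<otimes> (y \<otimes> z \<otimes> inv y \<otimes> inv z)" by blast
    define g where "g = (\<lambda>i::nat. if i = 0 then x else if i = 1 then y else z)"
    have "g \<in> {..<3} \<rightarrow> carrier G" using h by (auto simp: g_def)
    moreover have "word_eval G g v = t" using ev[of g] h by (simp add: g_def)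
    ultimately show "t \<in> T" unfolding word_image_def T_def by blast
  qed
  have Tc: "T \<subseteq> carrier G" using Tchar by auto
  have oneT: "\<one> \<in> T" unfolding Tchar by (rule bexI[of _ \<one>], rule bexI[of _ \<one>], rule bexI[of _ \<one>]) auto
  define N where "N = generate G T"
  have N: "subgroup N G" unfolding N_def using generate_is_subgroup[OF Tc] .
  have pw: "\<forall>h\<in>carrier G. h [^] p \<in> N"
  proof
    fix h assume h: "h \<in> carrier G"
    have "h [^] p \<in> T" unfolding Tchar using h
      by (intro bexI[of _ h] bexI[of _ \<one>]) auto
    then show "h [^] p \<in> N" unfolding N_def by (rule generate.incl)
  qed
  have cm: "\<forall>x\<in>carrier G. \<forall>y\<in>carrier G. x \<otimes> y \<otimes> inv x \<otimes> inv y \<in> N"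
  proof (intro ballI)
    fix x y assume xy: "x \<in> carrier G" "y \<in> carrier G"
    have "x \<otimes> y \<otimes> inv x \<otimes> inv y \<in> T" unfolding Tchar using xy
      by (intro bexI[of _ \<one>] bexI[of _ x] bexI[of _ y]) auto
    then show "x \<otimes> y \<otimes> inv x \<otimes> inv y \<in> N" unfolding N_def by (rule generate.incl)
  qed
  have "frattini G = N"
  proof
    show "frattini G \<subseteq> N"
    proof
      fix x assume x: "x \<in> frattini G"
      show "x \<in> N"
      proof (rule ccontr)
        assume "x \<notin> N"
        moreover have "x \<in> carrier G" using x by (simp add: frattini_def)
        ultimately obtain M where "maximal_subgroup M G" "x \<notin> M"
          using exists_max_avoiding[OF fin p N pw cm] by blast
        then show False using x by (auto simp: frattini_def)
      qed
    qed
    show "N \<subseteq> frattini G"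
    proof -
      have "N \<subseteq> M" if M: "maximal_subgroup M G" for M
      proof -
        have Ms: "subgroup M G" using M by (simp add: maximal_subgroup_def)
        have "T \<subseteq> M"
        proof
          fix t assume "t \<in> T"
          then obtain x y z where h: "x \<in> carrier G" "y \<in> carrier G" "z \<in> carrier G"
            "t = x [^] p \<otimes> (y \<otimes> z \<otimes> inv y \<otimes> inv z)" unfolding Tchar by blast
          then show "t \<in> M" using max_subgroup_contains[OF p ord M] Ms
            by (simp add: subgroup.m_closed)
        qed
        then show ?thesis unfolding N_def using Ms by (simp add: generate_subgroup_incl)
      qed
      moreover have "N \<subseteq> carrier G" using N subgroup.subset by blast
      ultimately show ?thesis by (auto simp: frattini_def)
    qed
  qed
  then show ?thesis using word_gen[OF fin fv _ oneT[unfolded T_def]] by (auto simp: T_def N_def)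
qed

end

theorem lemma5p1:
  fixes G :: "('a, 'b) monoid_scheme"
  assumes "group G" and "finite (carrier G)"
  shows "(\<exists>d \<ge> 1. \<exists>w. free_word d w \<and> word_image G d w = derived G (carrier G))
    \<and> (\<forall>p. p_group G p \<longrightarrow>
          (\<exists>d' \<ge> 1. \<exists>w'. free_word d' w' \<and> word_image G d' w' = frattini G))"
  using group.part1[OF assms] group.part2[OF assms(1)] by blast


end
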